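(* Let $(\mathbb{X},\dagger)$ be a dagger additive category and let $\begin{bmatrix}\alpha&\beta\\ \beta^\dagger&\delta\end{bmatrix}:B\oplus C\to B\oplus C$ be a $\dagger$-positive map such that there is a map $\begin{bmatrix}\phi&\psi\end{bmatrix}:B\oplus C\to D$ with $\begin{bmatrix}\alpha&\beta\\ \beta^\dagger&\delta\end{bmatrix}=\begin{bmatrix}\phi&\psi\end{bmatrix}^\dagger\circ\begin{bmatrix}\phi&\psi\end{bmatrix}$ for which $\phi:B\to D$ has an [MP.1,3]-inverse $\phi^\bullet:D\to B$. Then $m=\psi^\dagger\circ(\phi^\bullet)^\dagger$ is a conditional generator of $\begin{bmatrix}\alpha&\beta\\ \beta^\dagger&\delta\end{bmatrix}$.
   Context: A dagger additive category is a dagger category (contravariant identity-on-objects involutive functor $\dagger$) whose hom-sets are abelian groups with bilinear composition and additive $\dagger$, having a zero object and finite biproducts whose projections $\pi_j$ and injections $\iota_j$ satisfy $\pi_j^\dagger=\iota_j$. Maps between biproducts are written as matrices; composition is matrix multiplication and $\dagger$ is transpose with entrywise $\dagger$. An endomorphism $p$ is $\dagger$-positive if $p=\chi^\dagger\circ\chi$ for some map $\chi$. An [MP.1,3]-inverse of $f:A\to B$ is a map $f^\bullet:B\to A$ with $f\circ f^\bullet\circ f=f$ and $(f\circ f^\bullet)^\dagger=f\circ f^\bullet$. A conditional generator for a $\dagger$-positive map $\begin{bmatrix}\alpha&\beta\\ \beta^\dagger&\delta\end{bmatrix}:B\oplus C\to B\oplus C$ (with $\alpha:B\to B$, $\beta:C\to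 B$, $\delta:C\to C$) is a map $m:B\to C$ with (i) $m\circ\alpha=\beta^\dagger$ and (ii) $\delta-m\circ\beta$ is $\dagger$-positive. *)

theory Defs
  imports Main
begin

text \<open>A dagger additive category, presented explicitly: objects, hom-sets, composition
  (cmp g f means g after f), identities, dagger, the abelian group structure on each
  hom-set, a zero object, and binary biproducts with projections and injections.\<close>

record ('o, 'm) dacat =
  Ob    :: "'o set"
  Hom   :: "'o \<Rightarrow> 'o \<Rightarrow> 'm set"
  cmp   :: "'m \<Rightarrow> 'm \<Rightarrow> 'm"
  idt   :: "'o \<Rightarrow> 'm"
  dag   :: "'m \<Rightarrow> 'm"
  hadd  :: "'m \<Rightarrow> 'm \<Rightarrow> 'm"
  hzero :: "'o \<Rightarrow> 'o \<Rightarrow> 'm"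
  hneg  :: "'m \<Rightarrow> 'm"
  zobj  :: "'o"
  bprod :: "'o \<Rightarrow> 'o \<Rightarrow> 'o"
  prj1  :: "'o \<Rightarrow> 'o \<Rightarrow> 'm"
  prj2  :: "'o \<Rightarrow> 'o \<Rightarrow> 'm"
  inj1  :: "'o \<Rightarrow> 'o \<Rightarrow> 'm"
  inj2  :: "'o \<Rightarrow> 'o \<Rightarrow> 'm"

definition dagger_additive_category :: "('o, 'm, 'z) dacat_scheme \<Rightarrow> bool" where
  "dagger_additive_category X \<longleftrightarrow>
    \<comment> \<open>category\<close>
    (\<forall>A B f. f \<in> Hom X A B \<longrightarrow> A \<in> Ob X \<and> B \<in> Ob X) \<and>
    (\<forall>A B A' B' f. f \<in> Hom X A B \<longrightarrow> f \<in> Hom X A' B' \<longrightarrow> A = A' \<and> B = B') \<and>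
    (\<forall>A B C f g. f \<in> Hom X A B \<longrightarrow> g \<in> Hom X B C \<longrightarrow> cmp X g f \<in> Hom X A C) \<and>
    (\<forall>A B C D f g h. f \<in> Hom X A B \<longrightarrow> g \<in> Hom X B C \<longrightarrow> h \<in> Hom X C D \<longrightarrow>
        cmp X h (cmp X g f) = cmp X (cmp X h g) f) \<and>
    (\<forall>A \<in> Ob X. idt X A \<in> Hom X A A) \<and>
    (\<forall>A B f. f \<in> Hom X A B \<longrightarrow> cmp X f (idt X A) = f \<and> cmp X (idt X B) f = f) \<and>
    \<comment> \<open>dagger: contravariant, identity on objects, involutive functor\<close>
    (\<forall>A B f. f \<in> Hom X A B \<longrightarrow> dag X f \<in> Hom X B A \<and> dag X (dag X f) = f) \<and>
    (\<forall>A \<in> Ob X. dag X (idt X A) = idt X A) \<and>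
    (\<forall>A B C f g. f \<in> Hom X A B \<longrightarrow> g \<in> Hom X B C \<longrightarrow>
        dag X (cmp X g f) = cmp X (dag X f) (dag X g)) \<and>
    \<comment> \<open>hom-sets are abelian groups\<close>
    (\<forall>A \<in> Ob X. \<forall>B \<in> Ob X. hzero X A B \<in> Hom X A B) \<and>
    (\<forall>A B f g. f \<in> Hom X A B \<longrightarrow> g \<in> Hom X A B \<longrightarrow>
        hadd X f g \<in> Hom X A B \<and> hadd X f g = hadd X g f) \<and>
    (\<forall>A B f g h. f \<in> Hom X A B \<longrightarrow> g \<in> Hom X A B \<longrightarrow> h \<in> Hom X A B \<longrightarrow>
        hadd X (hadd X f g) h = hadd X f (hadd X g h)) \<and>
    (\<forall>A B f. f \<in> Hom X A B \<longrightarrow>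
        hadd X f (hzero X A B) = f \<and> hneg X f \<in> Hom X A B \<and>
        hadd X f (hneg X f) = hzero X A B) \<and>
    \<comment> \<open>bilinear composition, additive dagger\<close>
    (\<forall>A B C f g h. f \<in> Hom X A B \<longrightarrow> g \<in> Hom X B C \<longrightarrow> h \<in> Hom X B C \<longrightarrow>
        cmp X (hadd X g h) f = hadd X (cmp X g f) (cmp X h f)) \<and>
    (\<forall>A B C f g h. f \<in> Hom X A B \<longrightarrow> g \<in> Hom X A B \<longrightarrow> h \<in> Hom X B C \<longrightarrow>
        cmp X h (hadd X f g) = hadd X (cmp X h f) (cmp X h g)) \<and>
    (\<forall>A B f g. f \<in> Hom X A B \<longrightarrow> g \<in> Hom X A B \<longrightarrow>
        dag X (hadd X f g) = hadd X (dag X f) (dag X g)) \<and>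
    \<comment> \<open>zero object\<close>
    zobj X \<in> Ob X \<and>
    (\<forall>A \<in> Ob X. Hom X A (zobj X) = {hzero X A (zobj X)} \<and>
                 Hom X (zobj X) A = {hzero X (zobj X) A}) \<and>
    \<comment> \<open>binary biproducts with dagger-compatible projections and injections\<close>
    (\<forall>A \<in> Ob X. \<forall>B \<in> Ob X.
        bprod X A B \<in> Ob X \<and>
        prj1 X A B \<in> Hom X (bprod X A B) A \<and> prj2 X A B \<in> Hom X (bprod X A B) B \<and>
        inj1 X A B \<in> Hom X A (bprod X A B) \<and> inj2 X A B \<in> Hom X B (bprod X A B) \<and>
        cmp X (prj1 X A B) (inj1 X A B) = idt X A \<and>
        cmp X (prj2 X A B) (inj2 X A B) = idt X B \<and>
        cmp X (prj1 X A B) (inj2 X A B) = hzero X B A \<and>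
        cmp X (prj2 X A B) (inj1 X A B) = hzero X A B \<and>
        hadd X (cmp X (inj1 X A B) (prj1 X A B)) (cmp X (inj2 X A B) (prj2 X A B))
          = idt X (bprod X A B) \<and>
        dag X (prj1 X A B) = inj1 X A B \<and> dag X (prj2 X A B) = inj2 X A B)"

definition row :: "('o, 'm, 'z) dacat_scheme \<Rightarrow> 'o \<Rightarrow> 'o \<Rightarrow> 'm \<Rightarrow> 'm \<Rightarrow> 'm" where
  "row X A B f g = hadd X (cmp X f (prj1 X A B)) (cmp X g (prj2 X A B))"

text \<open>2x2 matrix [[a, b], [c, d]] : A \<oplus> B \<rightarrow> C \<oplus> D with a : A \<rightarrow> C, b : B \<rightarrow> C,
  c : A \<rightarrow> D, d : B \<rightarrow> D.\<close>
definition mat22 :: "('o, 'm, 'z) dacat_scheme \<Rightarrow> 'o \<Rightarrow> 'o \<Rightarrow> 'o \<Rightarrow> 'o \<Rightarrow>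
    'm \<Rightarrow> 'm \<Rightarrow> 'm \<Rightarrow> 'm \<Rightarrow> 'm" where
  "mat22 X A B C D a b c d =
     hadd X (hadd X (cmp X (inj1 X C D) (cmp X a (prj1 X A B)))
                    (cmp X (inj1 X C D) (cmp X b (prj2 X A B))))
            (hadd X (cmp X (inj2 X C D) (cmp X c (prj1 X A B)))
                    (cmp X (inj2 X C D) (cmp X d (prj2 X A B))))"

definition dag_positive :: "('o, 'm, 'z) dacat_scheme \<Rightarrow> 'o \<Rightarrow> 'm \<Rightarrow> bool" where
  "dag_positive X A p \<longleftrightarrow> (\<exists>E \<chi>. \<chi> \<in> Hom X A E \<and> p = cmp X (dag X \<chi>) \<chi>)"

definition mp13_inverse :: "('o, 'm, 'z) dacat_scheme \<Rightarrow> 'o \<Rightarrow> 'o \<Rightarrow> 'm \<Rightarrow> 'm \<Rightarrow> bool" where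
  "mp13_inverse X A B f g \<longleftrightarrow> g \<in> Hom X B A \<and> cmp X f (cmp X g f) = f \<and>
     dag X (cmp X f g) = cmp X f g"

definition conditional_generator ::
    "('o, 'm, 'z) dacat_scheme \<Rightarrow> 'o \<Rightarrow> 'o \<Rightarrow> 'm \<Rightarrow> 'm \<Rightarrow> bool" where
  "conditional_generator X B C P m \<longleftrightarrow>
     (let \<alpha> = cmp X (prj1 X B C) (cmp X P (inj1 X B C));
          \<beta> = cmp X (prj1 X B C) (cmp X P (inj2 X B C));
          \<delta> = cmp X (prj2 X B C) (cmp X P (inj2 X B C))
      in m \<in> Hom X B C \<and> cmp X m \<alpha> = dag X \<beta> \<and>
         dag_positive X C (hadd X \<delta> (hneg X (cmp X m \<beta>))))"

end

theory Submission
  imports Defs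
begin

locale dac =
  fixes X :: "('o, 'm, 'z) dacat_scheme"
  assumes D: "dagger_additive_category X"
begin

lemmas c = D[unfolded dagger_additive_category_def]

lemma hom_ob: "f \<in> Hom X A B \<Longrightarrow> A \<in> Ob X \<and> B \<in> Ob X"
  using c[THEN conjunct1] by blast
lemma cmp_hom: "f \<in> Hom X A B \<Longrightarrow> g \<in> Hom X B C \<Longrightarrow> cmp X g f \<in> Hom X A C"
  using c[THEN conjunct2, THEN conjunct2, THEN conjunct1] by blast
lemma assoc: "f \<in> Hom X A B \<Longrightarrow> g \<in> Hom X B C \<Longrightarrow> h \<in> Hom X C E \<Longrightarrow>
   cmp X h (cmp X g f) = cmp X (cmp X h g) f"
  using c[THEN conjunct2, THEN conjunct2, THEN conjunct2, THEN conjunct1] by blast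
lemma id_hom: "A \<in> Ob X \<Longrightarrow> idt X A \<in> Hom X A A"
  using c[THEN conjunct2, THEN conjunct2, THEN conjunct2, THEN conjunct2, THEN conjunct1] by blast
lemma idr: "f \<in> Hom X A B \<Longrightarrow> cmp X f (idt X A) = f"
  using c[THEN conjunct2, THEN conjunct2, THEN conjunct2, THEN conjunct2, THEN conjunct2, THEN conjunct1] by blast
lemma idl: "f \<in> Hom X A B \<Longrightarrow> cmp X (idt X B) f = f"
  using c[THEN conjunct2, THEN conjunct2, THEN conjunct2, THEN conjunct2, THEN conjunct2, THEN conjunct1] by blast
lemma dag_hom: "f \<in> Hom X A B \<Longrightarrow> dag X f \<in> Hom X B A"
  using c[THEN conjunct2, THEN conjunct2, THEN conjunct2, THEN conjunct2, THEN conjunct2, THEN conjunct2, THEN conjunct1] by blast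
lemma dag_dag: "f \<in> Hom X A B \<Longrightarrow> dag X (dag X f) = f"
  using c[THEN conjunct2, THEN conjunct2, THEN conjunct2, THEN conjunct2, THEN conjunct2, THEN conjunct2, THEN conjunct1] by blast
lemma dag_cmp: "f \<in> Hom X A B \<Longrightarrow> g \<in> Hom X B C \<Longrightarrow>
        dag X (cmp X g f) = cmp X (dag X f) (dag X g)"
  using c[THEN conjunct2, THEN conjunct2, THEN conjunct2, THEN conjunct2, THEN conjunct2, THEN conjunct2, THEN conjunct2, THEN conjunct2, THEN conjunct1] by blast
lemma zero_hom: "A \<in> Ob X \<Longrightarrow> B \<in> Ob X \<Longrightarrow> hzero X A B \<in> Hom X A B"
  using c[THEN conjunct2, THEN conjunct2, THEN conjunct2, THEN conjunct2, THEN conjunct2, THEN conjunct2, THEN conjunct2, THEN conjunct2, THEN conjunct2, THEN conjunct1] by blast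
lemma add_hom: "f \<in> Hom X A B \<Longrightarrow> g \<in> Hom X A B \<Longrightarrow> hadd X f g \<in> Hom X A B"
  using c[THEN conjunct2, THEN conjunct2, THEN conjunct2, THEN conjunct2, THEN conjunct2, THEN conjunct2, THEN conjunct2, THEN conjunct2, THEN conjunct2, THEN conjunct2, THEN conjunct1] by blast
lemma add_comm: "f \<in> Hom X A B \<Longrightarrow> g \<in> Hom X A B \<Longrightarrow> hadd X f g = hadd X g f"
  using c[THEN conjunct2, THEN conjunct2, THEN conjunct2, THEN conjunct2, THEN conjunct2, THEN conjunct2, THEN conjunct2, THEN conjunct2, THEN conjunct2, THEN conjunct2, THEN conjunct1] by blast
lemma add_assoc: "f \<in> Hom X A B \<Longrightarrow> g \<in> Hom X A B \<Longrightarrow> h \<in> Hom X A B \<Longrightarrow>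
        hadd X (hadd X f g) h = hadd X f (hadd X g h)"
  using c[THEN conjunct2, THEN conjunct2, THEN conjunct2, THEN conjunct2, THEN conjunct2, THEN conjunct2, THEN conjunct2, THEN conjunct2, THEN conjunct2, THEN conjunct2, THEN conjunct2, THEN conjunct1] by blast
lemma add_zero: "f \<in> Hom X A B \<Longrightarrow> hadd X f (hzero X A B) = f"
  using c[THEN conjunct2, THEN conjunct2, THEN conjunct2, THEN conjunct2, THEN conjunct2, THEN conjunct2, THEN conjunct2, THEN conjunct2, THEN conjunct2, THEN conjunct2, THEN conjunct2, THEN conjunct2, THEN conjunct1] by blast
lemma neg_hom: "f \<in> Hom X A B \<Longrightarrow> hneg X f \<in> Hom X A B"
  using c[THEN conjunct2, THEN conjunct2, THEN conjunct2, THEN conjunct2, THEN conjunct2, THEN conjunct2, THEN conjunct2, THEN conjunct2, THEN conjunct2, THEN conjunct2, THEN conjunct2, THEN conjunct2, THEN conjunct1] by blast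
lemma add_neg: "f \<in> Hom X A B \<Longrightarrow> hadd X f (hneg X f) = hzero X A B"
  using c[THEN conjunct2, THEN conjunct2, THEN conjunct2, THEN conjunct2, THEN conjunct2, THEN conjunct2, THEN conjunct2, THEN conjunct2, THEN conjunct2, THEN conjunct2, THEN conjunct2, THEN conjunct2, THEN conjunct1] by blast
lemma distl: "f \<in> Hom X A B \<Longrightarrow> g \<in> Hom X B C \<Longrightarrow> h \<in> Hom X B C \<Longrightarrow>
        cmp X (hadd X g h) f = hadd X (cmp X g f) (cmp X h f)"
  using c[THEN conjunct2, THEN conjunct2, THEN conjunct2, THEN conjunct2, THEN conjunct2, THEN conjunct2, THEN conjunct2, THEN conjunct2, THEN conjunct2, THEN conjunct2, THEN conjunct2, THEN conjunct2, THEN conjunct2, THEN conjunct1] by blast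
lemma distr: "f \<in> Hom X A B \<Longrightarrow> g \<in> Hom X A B \<Longrightarrow> h \<in> Hom X B C \<Longrightarrow>
        cmp X h (hadd X f g) = hadd X (cmp X h f) (cmp X h g)"
  using c[THEN conjunct2, THEN conjunct2, THEN conjunct2, THEN conjunct2, THEN conjunct2, THEN conjunct2, THEN conjunct2, THEN conjunct2, THEN conjunct2, THEN conjunct2, THEN conjunct2, THEN conjunct2, THEN conjunct2, THEN conjunct2, THEN conjunct1] by blast
lemma dag_add: "f \<in> Hom X A B \<Longrightarrow> g \<in> Hom X A B \<Longrightarrow>
        dag X (hadd X f g) = hadd X (dag X f) (dag X g)"
  using c[THEN conjunct2, THEN conjunct2, THEN conjunct2, THEN conjunct2, THEN conjunct2, THEN conjunct2, THEN conjunct2, THEN conjunct2, THEN conjunct2, THEN conjunct2, THEN conjunct2, THEN conjunct2, THEN conjunct2, THEN conjunct2, THEN conjunct2, THEN conjunct1] by blast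
lemma bp: "A \<in> Ob X \<Longrightarrow> B \<in> Ob X \<Longrightarrow>
        bprod X A B \<in> Ob X \<and>
        prj1 X A B \<in> Hom X (bprod X A B) A \<and> prj2 X A B \<in> Hom X (bprod X A B) B \<and>
        inj1 X A B \<in> Hom X A (bprod X A B) \<and> inj2 X A B \<in> Hom X B (bprod X A B) \<and>
        cmp X (prj1 X A B) (inj1 X A B) = idt X A \<and>
        cmp X (prj2 X A B) (inj2 X A B) = idt X B \<and>
        cmp X (prj1 X A B) (inj2 X A B) = hzero X B A \<and>
        cmp X (prj2 X A B) (inj1 X A B) = hzero X A B \<and>
        dag X (prj1 X A B) = inj1 X A B \<and> dag X (prj2 X A B) = inj2 X A B"
  using c[THEN conjunct2, THEN conjunct2, THEN conjunct2, THEN conjunct2, THEN conjunct2, THEN conjunct2, THEN conjunct2, THEN conjunct2, THEN conjunct2, THEN conjunct2, THEN conjunct2, THEN conjunct2, THEN conjunct2, THEN conjunct2, THEN conjunct2, THEN conjunct2, THEN conjunct2, THEN conjunct2] by blast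

lemma cancel: assumes "f \<in> Hom X A B" "g \<in> Hom X A B" "h \<in> Hom X A B"
  "hadd X f g = hadd X f h" shows "g = h"
proof -
  have z: "hadd X (hneg X f) f = hzero X A B"
    using assms add_comm add_neg neg_hom by metis
  have zg: "hadd X (hzero X A B) g = g" using assms add_comm add_zero zero_hom hom_ob by metis
  have zh: "hadd X (hzero X A B) h = h" using assms add_comm add_zero zero_hom hom_ob by metis
  have "g = hadd X (hneg X f) (hadd X f g)" using add_assoc[OF neg_hom[OF assms(1)] assms(1,2)] z zg by simp
  also have "\<dots> = hadd X (hneg X f) (hadd X f h)" using assms(4) by simp
  also have "\<dots> = h" using add_assoc[OF neg_hom[OF assms(1)] assms(1,3)] z zh by simp
  finally show ?thesis .
qed

lemma idem_zero: assumes "x \<in> Hom X A B" "hadd X x x = x" shows "x = hzero X A B"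
  using cancel[OF assms(1) assms(1) zero_hom] assms add_zero hom_ob by metis

lemma neg_unique: assumes "f \<in> Hom X A B" "g \<in> Hom X A B" "hadd X f g = hzero X A B"
  shows "g = hneg X f"
  using cancel[OF assms(1,2) neg_hom[OF assms(1)]] assms add_neg by metis

lemma cmp_zero_r: assumes "h \<in> Hom X B C" "A \<in> Ob X"
  shows "cmp X h (hzero X A B) = hzero X A C"
proof -
  have z: "hzero X A B \<in> Hom X A B" using assms hom_ob zero_hom by blast
  show ?thesis apply (rule idem_zero[OF cmp_hom[OF z assms(1)]])
    using distr[OF z z assms(1)] add_zero[OF z] by simp
qed

lemma cmp_zero_l: assumes "h \<in> Hom X A B" "C \<in> Ob X"
  shows "cmp X (hzero X B C) h = hzero X A C"
proof -
  have z: "hzero X B C \<in> Hom X B C" using assms hom_ob zero_hom by blast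
  show ?thesis apply (rule idem_zero[OF cmp_hom[OF assms(1) z]])
    using distl[OF assms(1) z z] add_zero[OF z] by simp
qed

lemma dag_zero: assumes "A \<in> Ob X" "B \<in> Ob X" shows "dag X (hzero X A B) = hzero X B A"
proof -
  have z: "hzero X A B \<in> Hom X A B" using assms zero_hom by blast
  show ?thesis apply (rule idem_zero[OF dag_hom[OF z]])
    using dag_add[OF z z] add_zero[OF z] by simp
qed

lemma cmp_neg_r: assumes "f \<in> Hom X A B" "h \<in> Hom X B C"
  shows "cmp X h (hneg X f) = hneg X (cmp X h f)"
  apply (rule neg_unique[OF cmp_hom[OF assms] cmp_hom[OF neg_hom[OF assms(1)] assms(2)]])
  using distr[OF assms(1) neg_hom[OF assms(1)] assms(2)] add_neg[OF assms(1)] cmp_zero_r assms hom_ob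
  by metis

lemma cmp_neg_l: assumes "f \<in> Hom X A B" "h \<in> Hom X B C"
  shows "cmp X (hneg X h) f = hneg X (cmp X h f)"
  apply (rule neg_unique[OF cmp_hom[OF assms] cmp_hom[OF assms(1) neg_hom[OF assms(2)]]])
  using distl[OF assms(1) assms(2) neg_hom[OF assms(2)]] add_neg[OF assms(2)] cmp_zero_l assms hom_ob
  by metis

lemma dag_neg: assumes "f \<in> Hom X A B"
  shows "dag X (hneg X f) = hneg X (dag X f)"
  apply (rule neg_unique[OF dag_hom[OF assms] dag_hom[OF neg_hom[OF assms]]])
  using dag_add[OF assms neg_hom[OF assms]] add_neg[OF assms] dag_zero assms hom_ob
  by metis

lemma neg_neg: assumes "f \<in> Hom X A B" shows "hneg X (hneg X f) = f"
  using neg_unique[OF neg_hom[OF assms] assms] add_comm[OF assms neg_hom[OF assms]] add_neg[OF assms]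
  by metis

lemma neg_zero: assumes "A \<in> Ob X" "B \<in> Ob X" shows "hneg X (hzero X A B) = hzero X A B"
  using neg_unique[OF zero_hom[OF assms] zero_hom[OF assms]] add_zero[OF zero_hom[OF assms]] by metis

lemma zero_add: assumes "f \<in> Hom X A B" shows "hadd X (hzero X A B) f = f"
  using add_comm[OF assms zero_hom] add_zero[OF assms] hom_ob[OF assms] by metis

lemma entry: assumes R: "R \<in> Hom X E D" and i: "i \<in> Hom X B E" and q: "q \<in> Hom X C E"
  shows "cmp X (dag X i) (cmp X (cmp X (dag X R) R) q) = cmp X (dag X (cmp X R i)) (cmp X R q)"
proof -
  have "cmp X (cmp X (dag X R) R) q = cmp X (dag X R) (cmp X R q)"
    using assoc[OF q R dag_hom[OF R]] by simp
  moreover have "cmp X (dag X i) (cmp X (dag X R) (cmp X R q)) = cmp X (cmp X (dag X i) (dag X R)) (cmp X R q)"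
    using assoc[OF cmp_hom[OF q R] dag_hom[OF R] dag_hom[OF i]] by simp
  moreover have "cmp X (dag X i) (dag X R) = dag X (cmp X R i)" using dag_cmp[OF i R] by simp
  ultimately show ?thesis by simp
qed

lemma row_inj: assumes B: "B \<in> Ob X" and C: "C \<in> Ob X" and f: "f \<in> Hom X B E" and g: "g \<in> Hom X C E"
  shows "cmp X (row X B C f g) (inj1 X B C) = f" "cmp X (row X B C f g) (inj2 X B C) = g"
    "row X B C f g \<in> Hom X (bprod X B C) E"
proof -
  note b = bp[OF B C]
  have p1: "cmp X f (prj1 X B C) \<in> Hom X (bprod X B C) E" using b f cmp_hom by blast
  have p2: "cmp X g (prj2 X B C) \<in> Hom X (bprod X B C) E" using b g cmp_hom by blast
  show "row X B C f g \<in> Hom X (bprod X B C) E" unfolding row_def using add_hom[OF p1 p2] .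
  have "cmp X (row X B C f g) (inj1 X B C) = hadd X (cmp X (cmp X f (prj1 X B C)) (inj1 X B C)) (cmp X (cmp X g (prj2 X B C)) (inj1 X B C))"
    unfolding row_def using distl[OF _ p1 p2] b by blast
  also have "\<dots> = hadd X (cmp X f (cmp X (prj1 X B C) (inj1 X B C))) (cmp X g (cmp X (prj2 X B C) (inj1 X B C)))"
    using assoc b f g by metis
  also have "\<dots> = f" using b idr[OF f] cmp_zero_r[OF g B] add_zero[OF f] by simp
  finally show "cmp X (row X B C f g) (inj1 X B C) = f" .
  have "cmp X (row X B C f g) (inj2 X B C) = hadd X (cmp X (cmp X f (prj1 X B C)) (inj2 X B C)) (cmp X (cmp X g (prj2 X B C)) (inj2 X B C))"
    unfolding row_def using distl[OF _ p1 p2] b by blast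
  also have "\<dots> = hadd X (cmp X f (cmp X (prj1 X B C) (inj2 X B C))) (cmp X g (cmp X (prj2 X B C) (inj2 X B C)))"
    using assoc b f g by metis
  also have "\<dots> = g" using b idr[OF g] cmp_zero_r[OF f C] zero_add[OF g] by simp
  finally show "cmp X (row X B C f g) (inj2 X B C) = g" .
qed

end

theorem mainTheorem12:
  fixes X :: "('o, 'm, 'z) dacat_scheme"
  assumes "dagger_additive_category X"
    and "B \<in> Ob X" and "C \<in> Ob X" and "D \<in> Ob X"
    and "\<alpha> \<in> Hom X B B" and "\<beta> \<in> Hom X C B" and "\<delta> \<in> Hom X C C"
    and "dag_positive X (bprod X B C) (mat22 X B C B C \<alpha> \<beta> (dag X \<beta>) \<delta>)"
    and "\<phi> \<in> Hom X B D" and "\<psi> \<in> Hom X C D"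
    and "mat22 X B C B C \<alpha> \<beta> (dag X \<beta>) \<delta>
           = cmp X (dag X (row X B C \<phi> \<psi>)) (row X B C \<phi> \<psi>)"
    and "mp13_inverse X B D \<phi> \<phi>b"
  shows "conditional_generator X B C (mat22 X B C B C \<alpha> \<beta> (dag X \<beta>) \<delta>)
           (cmp X (dag X \<psi>) (dag X \<phi>b))"
proof -
  interpret dac X using assms(1) by (unfold_locales)
  note b = bp[OF assms(2,3)]
  have f: "\<phi> \<in> Hom X B D" and g: "\<psi> \<in> Hom X C D" using assms by auto
  have fb: "\<phi>b \<in> Hom X D B" and fbf: "cmp X \<phi> (cmp X \<phi>b \<phi>) = \<phi>"
    and esa: "dag X (cmp X \<phi> \<phi>b) = cmp X \<phi> \<phi>b" using assms(12) unfolding mp13_inverse_def by auto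
  define R where "R = row X B C \<phi> \<psi>"
  have R: "R \<in> Hom X (bprod X B C) D" and R1: "cmp X R (inj1 X B C) = \<phi>" and R2: "cmp X R (inj2 X B C) = \<psi>"
    using row_inj[OF assms(2,3) f g] unfolding R_def by auto
  have d1: "dag X (inj1 X B C) = prj1 X B C" using b dag_dag by metis
  have d2: "dag X (inj2 X B C) = prj2 X B C" using b dag_dag by metis
  define P where "P = cmp X (dag X R) R"
  have Pe: "mat22 X B C B C \<alpha> \<beta> (dag X \<beta>) \<delta> = P" using assms(11) unfolding P_def R_def by simp
  have ea: "cmp X (prj1 X B C) (cmp X P (inj1 X B C)) = cmp X (dag X \<phi>) \<phi>"
    using entry[OF R, of "inj1 X B C" B "inj1 X B C" B] b R1 d1 unfolding P_def by simp
  have eb: "cmp X (prj1 X B C) (cmp X P (inj2 X B C)) = cmp X (dag X \<phi>) \<psi>"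
    using entry[OF R, of "inj1 X B C" B "inj2 X B C" C] b R1 R2 d1 unfolding P_def by simp
  have ed: "cmp X (prj2 X B C) (cmp X P (inj2 X B C)) = cmp X (dag X \<psi>) \<psi>"
    using entry[OF R, of "inj2 X B C" C "inj2 X B C" C] b R2 d2 unfolding P_def by simp
  define e where "e = cmp X \<phi> \<phi>b"
  have e: "e \<in> Hom X D D" unfolding e_def using cmp_hom[OF fb f] .
  have ed': "dag X e = e" using esa unfolding e_def .
  have ef: "cmp X e \<phi> = \<phi>" unfolding e_def using fbf assoc[OF f fb f] by simp
  have ee: "cmp X e e = e" unfolding e_def using assoc[OF cmp_hom[OF fb f] fb f] fbf
    assoc[OF fb f fb] assoc[OF fb cmp_hom[OF f fb] f] by metis
  define m where "m = cmp X (dag X \<psi>) (dag X \<phi>b)"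
  have m: "m \<in> Hom X B C" unfolding m_def using cmp_hom[OF dag_hom[OF fb] dag_hom[OF g]] .
  have mdef2: "cmp X m (dag X \<phi>) = cmp X (dag X \<psi>) e"
  proof -
    have "cmp X m (dag X \<phi>) = cmp X (dag X \<psi>) (cmp X (dag X \<phi>b) (dag X \<phi>))"
      unfolding m_def using assoc[OF dag_hom[OF f] dag_hom[OF fb] dag_hom[OF g]] by simp
    also have "\<dots> = cmp X (dag X \<psi>) (dag X e)" unfolding e_def using dag_cmp[OF fb f] by simp
    finally show ?thesis using ed' by simp
  qed
  have i: "cmp X m (cmp X (dag X \<phi>) \<phi>) = dag X (cmp X (dag X \<phi>) \<psi>)"
  proof -
    have "cmp X m (cmp X (dag X \<phi>) \<phi>) = cmp X (cmp X m (dag X \<phi>)) \<phi>"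
      using assoc[OF f dag_hom[OF f] m] .
    also have "\<dots> = cmp X (dag X \<psi>) (cmp X e \<phi>)" using mdef2 assoc[OF f e dag_hom[OF g]] by simp
    also have "\<dots> = cmp X (dag X \<psi>) (dag X (dag X \<phi>))" using ef dag_dag[OF f] by simp
    also have "\<dots> = dag X (cmp X (dag X \<phi>) \<psi>)" using dag_cmp[OF g dag_hom[OF f]] by simp
    finally show ?thesis .
  qed
  define k where "k = cmp X (dag X \<psi>) (cmp X e \<psi>)"
  have eg: "cmp X e \<psi> \<in> Hom X C D" using cmp_hom[OF g e] .
  have k: "k \<in> Hom X C C" unfolding k_def using cmp_hom[OF eg dag_hom[OF g]] .
  have mb: "cmp X m (cmp X (dag X \<phi>) \<psi>) = k"
    unfolding k_def using assoc[OF g dag_hom[OF f] m] mdef2 assoc[OF g e dag_hom[OF g]] by simp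
  define \<chi> where "\<chi> = hadd X \<psi> (hneg X (cmp X e \<psi>))"
  have ng: "hneg X (cmp X e \<psi>) \<in> Hom X C D" using neg_hom[OF eg] .
  have chi: "\<chi> \<in> Hom X C D" unfolding \<chi>_def using add_hom[OF g ng] .
  have dchi: "dag X \<chi> = hadd X (dag X \<psi>) (hneg X (cmp X (dag X \<psi>) e))"
    unfolding \<chi>_def using dag_add[OF g ng] dag_neg[OF eg] dag_cmp[OF g e] ed' by simp
  have dg: "dag X \<psi> \<in> Hom X D C" using dag_hom[OF g] .
  have ge: "cmp X (dag X \<psi>) e \<in> Hom X D C" using cmp_hom[OF e dg] .
  have nge: "hneg X (cmp X (dag X \<psi>) e) \<in> Hom X D C" using neg_hom[OF ge] .
  have s1: "cmp X (dag X \<chi>) (cmp X e \<psi>) = hzero X C C"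
  proof -
    have "cmp X (dag X \<chi>) (cmp X e \<psi>) = hadd X k (cmp X (hneg X (cmp X (dag X \<psi>) e)) (cmp X e \<psi>))"
      unfolding dchi k_def using distl[OF eg dg nge] by simp
    also have "cmp X (hneg X (cmp X (dag X \<psi>) e)) (cmp X e \<psi>) = hneg X k"
    proof -
      have "cmp X (cmp X (dag X \<psi>) e) (cmp X e \<psi>) = cmp X (dag X \<psi>) (cmp X (cmp X e e) \<psi>)"
        using assoc[OF eg e dg] assoc[OF g e e] by simp
      then show ?thesis using cmp_neg_l[OF eg ge] ee unfolding k_def by simp
    qed
    finally show ?thesis using add_neg[OF k] by simp
  qed
  have s2: "cmp X (dag X \<chi>) \<psi> = hadd X (cmp X (dag X \<psi>) \<psi>) (hneg X k)"
  proof -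
    have "cmp X (dag X \<chi>) \<psi> = hadd X (cmp X (dag X \<psi>) \<psi>) (cmp X (hneg X (cmp X (dag X \<psi>) e)) \<psi>)"
      unfolding dchi using distl[OF g dg nge] by simp
    also have "cmp X (hneg X (cmp X (dag X \<psi>) e)) \<psi> = hneg X k"
      using cmp_neg_l[OF g ge] assoc[OF g e dg] unfolding k_def by simp
    finally show ?thesis .
  qed
  have cc: "cmp X (dag X \<chi>) \<chi> = hadd X (cmp X (dag X \<psi>) \<psi>) (hneg X k)"
  proof -
    have "cmp X (dag X \<chi>) \<chi> = hadd X (cmp X (dag X \<chi>) \<psi>) (cmp X (dag X \<chi>) (hneg X (cmp X e \<psi>)))"
      unfolding \<chi>_def[symmetric] using distr[OF g ng dag_hom[OF chi]] unfolding \<chi>_def by simp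
    also have "cmp X (dag X \<chi>) (hneg X (cmp X e \<psi>)) = hzero X C C"
      using cmp_neg_r[OF eg dag_hom[OF chi]] s1 neg_zero assms(3) by simp
    finally show ?thesis using s2 add_zero add_hom[OF cmp_hom[OF g dg] neg_hom[OF k]] by simp
  qed
  have pos: "dag_positive X C (hadd X (cmp X (dag X \<psi>) \<psi>) (hneg X k))"
    unfolding dag_positive_def using chi cc by metis
  show ?thesis unfolding conditional_generator_def Let_def Pe ea eb ed m_def[symmetric]
    using m i mb pos by simp
qed

end
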